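(* Let $\Phi$ be a linear map between finite-dimensional matrix spaces, represented by coefficients $\Phi^{b,d}_{a,c}$ via $\Phi(|b\rangle\langle d|)=\sum_{a,c}\Phi^{b,d}_{a,c}|a\rangle\langle c|$ in the incoherent bases. Then $\Phi$ is completely positive iff there are matrices $K_n$ with entries $K_{n_{a,b}}$ such that $\Phi^{b,d}_{a,c}=\sum_n K_{n_{a,b}}K^*_{n_{c,d}}$ for all $a,b,c,d$. Under this condition: (1) $\Phi$ is a detection-incoherent quantum operation iff there is a conditional probability distribution $p(a|b)$ (i.e. $p(a|b)\ge0$, $\sum_a p(a|b)=1$) with $\Phi^{b,d}_{a,a}=p(a|b)\delta_{b,d}$ for all $a,b,d$; (2) $\Phi$ is a creation-incoherent quantum operation iff there is a conditional probability distribution $p(b|a)$ with $\Phi^{a,a}_{b,c}=p(b|a)\delta_{b,c}$ for all $a,b,c$, and $\sum_a\Phi^{b,d}_{a,a}=\delta_{b,d}$ for all $b,d$; (3) $\Phi$ is a detection-creation-incoherent quantum operation iff there are conditional probability distributions with $\Phi^{b,d}_{a,a}=p(a|b)\delta_{b,d}$ for all $a,b,d$ and $\Phi^{a,a}_{b,c}=p(b|a)\delta_{b,c}$ for all $a,b,c$.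
   Context: Every finite-dimensional system carries a fixed orthonormal incoherent basis $\{|i\rangle\}$; the total dephasing map is $\Delta(\rho)=\sum_i|i\rangle\langle i|\rho|i\rangle\langle i|$. A quantum operation is a completely positive trace-preserving linear map. $\Phi$ is detection-incoherent iff $\Delta\Phi=\Delta\Phi\Delta$, creation-incoherent iff $\Phi\Delta=\Delta\Phi\Delta$, and detection-creation-incoherent iff $\Delta\Phi=\Phi\Delta$. *)

theory Defs
  imports "Jordan_Normal_Form.Matrix"
begin

text \<open>Matrices are Jordan_Normal_Form matrices; the incoherent basis is the standard basis.
  A map Phi from m x m to n x n complex matrices is a function on complex mat; only its
  behaviour on carrier_mat m m matters.\<close>

definition ket_bra :: "nat \<Rightarrow> nat \<Rightarrow> nat \<Rightarrow> complex mat" where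
  "ket_bra m b d = mat m m (\<lambda>(i,j). if i = b \<and> j = d then 1 else 0)"

text \<open>coeff m Phi b d a c is Phi^{b,d}_{a,c}, i.e. the (a,c) entry of Phi(|b><d|).\<close>
definition coeff :: "nat \<Rightarrow> (complex mat \<Rightarrow> complex mat) \<Rightarrow> nat \<Rightarrow> nat \<Rightarrow> nat \<Rightarrow> nat \<Rightarrow> complex" where
  "coeff m \<Phi> b d a c = \<Phi> (ket_bra m b d) $$ (a, c)"

definition linear_map_mat :: "nat \<Rightarrow> nat \<Rightarrow> (complex mat \<Rightarrow> complex mat) \<Rightarrow> bool" where
  "linear_map_mat m n \<Phi> \<longleftrightarrow>
     (\<forall>A \<in> carrier_mat m m. \<Phi> A \<in> carrier_mat n n) \<and>
     (\<forall>A \<in> carrier_mat m m. \<forall>B \<in> carrier_mat m m. \<Phi> (A + B) = \<Phi> A + \<Phi> B) \<and>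
     (\<forall>A \<in> carrier_mat m m. \<forall>x. \<Phi> (x \<cdot>\<^sub>m A) = x \<cdot>\<^sub>m \<Phi> A)"

definition psd :: "nat \<Rightarrow> complex mat \<Rightarrow> bool" where
  "psd k A \<longleftrightarrow> A \<in> carrier_mat k k \<and> (\<forall>v \<in> carrier_vec k. (A *\<^sub>v v) \<bullet>c v \<ge> 0)"

text \<open>The ampliation id_k \<otimes> Phi acting on M_k(M_m) = M_{km}, in block form:
  block (i,j) of the result is Phi applied to block (i,j) of the argument.\<close>
definition ampliation :: "nat \<Rightarrow> nat \<Rightarrow> nat \<Rightarrow> (complex mat \<Rightarrow> complex mat) \<Rightarrow> complex mat \<Rightarrow> complex mat" where
  "ampliation k m n \<Phi> X = mat (k * n) (k * n) (\<lambda>(p, q).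
      \<Phi> (mat m m (\<lambda>(b, d). X $$ ((p div n) * m + b, (q div n) * m + d))) $$ (p mod n, q mod n))"

definition completely_positive :: "nat \<Rightarrow> nat \<Rightarrow> (complex mat \<Rightarrow> complex mat) \<Rightarrow> bool" where
  "completely_positive m n \<Phi> \<longleftrightarrow>
     (\<forall>k. \<forall>X. psd (k * m) X \<longrightarrow> psd (k * n) (ampliation k m n \<Phi> X))"

definition mtrace :: "complex mat \<Rightarrow> complex" where
  "mtrace A = (\<Sum>i < dim_row A. A $$ (i, i))"

definition trace_preserving :: "nat \<Rightarrow> (complex mat \<Rightarrow> complex mat) \<Rightarrow> bool" where
  "trace_preserving m \<Phi> \<longleftrightarrow> (\<forall>A \<in> carrier_mat m m. mtrace (\<Phi> A) = mtrace A)"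

definition quantum_operation :: "nat \<Rightarrow> nat \<Rightarrow> (complex mat \<Rightarrow> complex mat) \<Rightarrow> bool" where
  "quantum_operation m n \<Phi> \<longleftrightarrow>
     linear_map_mat m n \<Phi> \<and> completely_positive m n \<Phi> \<and> trace_preserving m \<Phi>"

definition dephase :: "complex mat \<Rightarrow> complex mat" where
  "dephase A = mat (dim_row A) (dim_col A) (\<lambda>(i, j). if i = j then A $$ (i, j) else 0)"

definition detection_incoherent :: "nat \<Rightarrow> (complex mat \<Rightarrow> complex mat) \<Rightarrow> bool" where
  "detection_incoherent m \<Phi> \<longleftrightarrow>
     (\<forall>A \<in> carrier_mat m m. dephase (\<Phi> A) = dephase (\<Phi> (dephase A)))"

definition creation_incoherent :: "nat \<Rightarrow> (complex mat \<Rightarrow> complex mat) \<Rightarrow> bool" where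
  "creation_incoherent m \<Phi> \<longleftrightarrow>
     (\<forall>A \<in> carrier_mat m m. \<Phi> (dephase A) = dephase (\<Phi> (dephase A)))"

definition detection_creation_incoherent :: "nat \<Rightarrow> (complex mat \<Rightarrow> complex mat) \<Rightarrow> bool" where
  "detection_creation_incoherent m \<Phi> \<longleftrightarrow>
     (\<forall>A \<in> carrier_mat m m. dephase (\<Phi> A) = \<Phi> (dephase A))"

text \<open>cond_prob n m p: p x y = p(x|y) is a conditional distribution on outcomes x < n given y < m.\<close>
definition cond_prob :: "nat \<Rightarrow> nat \<Rightarrow> (nat \<Rightarrow> nat \<Rightarrow> real) \<Rightarrow> bool" where
  "cond_prob n m p \<longleftrightarrow> (\<forall>x < n. \<forall>y < m. p x y \<ge> 0) \<and> (\<forall>y < m. (\<Sum>x < n. p x y) = 1)"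

end

theory Submission
  imports Defs
begin

definition qf :: "nat \<Rightarrow> (nat \<Rightarrow> nat \<Rightarrow> complex) \<Rightarrow> (nat \<Rightarrow> complex) \<Rightarrow> complex" where
  "qf N C v = (\<Sum>i<N. \<Sum>j<N. cnj (v i) * C i j * v j)"

definition psdf :: "nat \<Rightarrow> (nat \<Rightarrow> nat \<Rightarrow> complex) \<Rightarrow> bool" where
  "psdf N C \<longleftrightarrow> (\<forall>v. 0 \<le> qf N C v)"

lemma qf_alt: "qf N C v = (\<Sum>i<N. cnj (v i) * (\<Sum>j<N. C i j * v j))"
  unfolding qf_def by (simp add: sum_distrib_left mult.assoc)

lemma sum_two:
  fixes f :: "nat \<Rightarrow> complex"
  assumes "s < N" "j < N" "s \<noteq> j"
  shows "(\<Sum>k<N. f k * (if k = s then x else if k = j then y else 0)) = f s * x + f j * y"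
proof -
  have "(\<Sum>k<N. f k * (if k = s then x else if k = j then y else 0))
      = (\<Sum>k<N. (if k = s then f s * x else 0) + (if k = j then f j * y else 0))"
    by (rule sum.cong) (use assms in auto)
  also have "\<dots> = f s * x + f j * y" using assms by (simp add: sum.distrib)
  finally show ?thesis .
qed

lemma sum_one:
  fixes f :: "nat \<Rightarrow> complex"
  assumes "s < N"
  shows "(\<Sum>k<N. f k * (if k = s then x else 0)) = f s * x"
proof -
  have "(\<Sum>k<N. f k * (if k = s then x else 0)) = (\<Sum>k<N. (if k = s then f s * x else 0))"
    by (rule sum.cong) auto
  also have "\<dots> = f s * x" using assms by simp
  finally show ?thesis .
qed

lemma qf_two:
  assumes "s < N" "j < N" "s \<noteq> j"
  shows "qf N C (\<lambda>k. if k = s then x else if k = j then y else 0)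
     = cnj x * C s s * x + cnj x * C s j * y + cnj y * C j s * x + cnj y * C j j * y"
proof -
  have "qf N C (\<lambda>k. if k = s then x else if k = j then y else 0)
     = (\<Sum>i<N. (C i s * x + C i j * y) * (if i = s then cnj x else if i = j then cnj y else 0))"
    unfolding qf_alt by (rule sum.cong) (use assms in \<open>auto simp: sum_two\<close>)
  also have "\<dots> = (C s s * x + C s j * y) * cnj x + (C j s * x + C j j * y) * cnj y"
    using assms by (rule sum_two)
  finally show ?thesis by (simp add: algebra_simps)
qed

lemma qf_one:
  assumes "s < N"
  shows "qf N C (\<lambda>k. if k = s then x else 0) = cnj x * C s s * x"
proof -
  have "qf N C (\<lambda>k. if k = s then x else 0)
     = (\<Sum>i<N. (C i s * x) * (if i = s then cnj x else 0))"
    unfolding qf_alt by (rule sum.cong) (use assms in \<open>auto simp: sum_one\<close>)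
  also have "\<dots> = (C s s * x) * cnj x"
    using assms by (rule sum_one)
  finally show ?thesis by (simp add: algebra_simps)
qed

lemma psdf_diag:
  assumes "psdf N C" "s < N"
  shows "Im (C s s) = 0" "Re (C s s) \<ge> 0"
proof -
  have "0 \<le> qf N C (\<lambda>k. if k = s then 1 else 0)" using assms unfolding psdf_def by blast
  then have "0 \<le> C s s" using qf_one[OF assms(2), of C 1] by simp
  then show "Im (C s s) = 0" "Re (C s s) \<ge> 0" by (auto simp: less_eq_complex_def)
qed

lemma psdf_herm:
  assumes "psdf N C" "i < N" "j < N"
  shows "C i j = cnj (C j i)"
proof (cases "i = j")
  case True
  then show ?thesis using psdf_diag[OF assms(1,2)] by (simp add: complex_eq_iff)
next
  case False
  have d: "Im (C i i) = 0" "Im (C j j) = 0" using psdf_diag assms by auto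
  have "0 \<le> qf N C (\<lambda>k. if k = i then 1 else if k = j then 1 else 0)" using assms unfolding psdf_def by blast
  then have h1: "Im (C i i + C i j + C j i + C j j) = 0"
    using qf_two[OF assms(2,3) False, of C 1 1] by (simp add: less_eq_complex_def)
  have "0 \<le> qf N C (\<lambda>k. if k = i then 1 else if k = j then \<i> else 0)" using assms unfolding psdf_def by blast
  then have h2: "Im (C i i + \<i> * C i j - \<i> * C j i + C j j) = 0"
    using qf_two[OF assms(2,3) False, of C 1 \<i>] by (simp add: less_eq_complex_def algebra_simps)
  show ?thesis using h1 h2 d by (simp add: complex_eq_iff)
qed


lemma psdf_zero_row:
  assumes "psdf N C" "s < N" "j < N" "C s s = 0"
  shows "C s j = 0"
proof (rule ccontr)
  assume c: "C s j \<noteq> 0"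
  then have sj: "s \<noteq> j" using assms by auto
  define c where "c = C s j"
  have pos: "Re c ^ 2 + Im c ^ 2 > 0" using c unfolding c_def
    by (simp add: sum_power2_gt_zero_iff complex_eq_iff)
  define x where "x = (Re (C j j) + 1) / (2 * (Re c ^ 2 + Im c ^ 2))"
  define t where "t = - complex_of_real x * c"
  have hj: "C j s = cnj c" using psdf_herm[OF assms(1) assms(3) assms(2)] unfolding c_def by simp
  have "0 \<le> qf N C (\<lambda>k. if k = s then t else if k = j then 1 else 0)" using assms unfolding psdf_def by blast
  then have "0 \<le> cnj t * c + cnj c * t + C j j"
    using qf_two[OF assms(2,3) sj, of C t 1] assms(4) hj unfolding c_def by (simp add: algebra_simps)
  then have "0 \<le> Re (cnj t * c + cnj c * t + C j j)" by (simp add: less_eq_complex_def)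
  also have "Re (cnj t * c + cnj c * t + C j j) = Re (C j j) - 2 * x * (Re c ^ 2 + Im c ^ 2)"
    unfolding t_def by (simp add: algebra_simps power2_eq_square)
  also have "\<dots> = -1" unfolding x_def using pos by (simp add: field_simps)
  finally show False by simp
qed

lemma sum_prod_split:
  fixes a b :: "nat \<Rightarrow> complex"
  shows "(\<Sum>i<N. \<Sum>j<N. a i * b j) = (\<Sum>i<N. a i) * (\<Sum>j<N. b j)"
  by (simp add: sum_product)

lemma psdf_schur:
  assumes "psdf N C" "s < N" "C s s \<noteq> 0"
  shows "psdf N (\<lambda>i j. C i j - C i s * C s j / C s s)"
proof -
  define C' where "C' = (\<lambda>i j. C i j - C i s * C s j / C s s)"
  have z1: "C' s j = 0" for j unfolding C'_def using assms(3) by simp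
  have z2: "C' i s = 0" for i unfolding C'_def using assms(3) by simp
  have "0 \<le> qf N C' v" for v
  proof -
    define d where "d = (\<Sum>j<N. C s j * v j) / C s s"
    define u where "u = (\<lambda>k. v k - (if k = s then d else 0))"
    have "(\<Sum>j<N. C s j * u j) = (\<Sum>j<N. C s j * v j) - (\<Sum>j<N. C s j * (if j = s then d else 0))"
      unfolding u_def by (simp add: algebra_simps sum_subtractf)
    also have "\<dots> = 0" using sum_one[OF assms(2), of "C s" d] assms(3) unfolding d_def by simp
    finally have u0: "(\<Sum>j<N. C s j * u j) = 0" .
    have "qf N C' v = qf N C' u"
      unfolding qf_def
      by (rule sum.cong, simp, rule sum.cong, simp) (auto simp: u_def z1 z2)
    also have "qf N C' u = (\<Sum>i<N. \<Sum>j<N. cnj (u i) * C i j * u j - (cnj (u i) * C i s / C s s) * (C s j * u j))"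
      unfolding qf_def C'_def by (intro sum.cong refl) (simp add: algebra_simps)
    also have "\<dots> = qf N C u - (\<Sum>i<N. \<Sum>j<N. (cnj (u i) * C i s / C s s) * (C s j * u j))"
      unfolding qf_def by (simp only: sum_subtractf)
    also have "(\<Sum>i<N. \<Sum>j<N. (cnj (u i) * C i s / C s s) * (C s j * u j)) = 0"
      unfolding sum_prod_split u0 by simp
    finally show ?thesis using assms(1) unfolding psdf_def by simp
  qed
  then show ?thesis unfolding psdf_def C'_def by blast
qed

lemma decomp_aux:
  assumes "finite S"
  shows "\<forall>C. psdf N C \<and> (\<forall>i<N. \<forall>j<N. (i \<notin> S \<or> j \<notin> S) \<longrightarrow> C i j = 0) \<longrightarrow>
     (\<exists>(r::nat) w. \<forall>i<N. \<forall>j<N. C i j = (\<Sum>k<r. w k i * cnj (w k j)))"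
  using assms
proof (induction S rule: finite_induct)
  case empty
  show ?case
  proof (intro allI impI)
    fix C assume "psdf N C \<and> (\<forall>i<N. \<forall>j<N. (i \<notin> {} \<or> j \<notin> {}) \<longrightarrow> C i j = 0)"
    then show "\<exists>(r::nat) w. \<forall>i<N. \<forall>j<N. C i j = (\<Sum>k<r. w k i * cnj (w k j))"
      by (intro exI[of _ 0]) auto
  qed
next
  case (insert s F)
  show ?case
  proof (intro allI impI)
    fix C assume a: "psdf N C \<and> (\<forall>i<N. \<forall>j<N. (i \<notin> insert s F \<or> j \<notin> insert s F) \<longrightarrow> C i j = 0)"
    then have p: "psdf N C" and sup: "\<And>i j. i < N \<Longrightarrow> j < N \<Longrightarrow> i \<notin> insert s F \<or> j \<notin> insert s F \<Longrightarrow> C i j = 0"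
      by auto
    show "\<exists>(r::nat) w. \<forall>i<N. \<forall>j<N. C i j = (\<Sum>k<r. w k i * cnj (w k j))"
    proof (cases "s < N \<and> C s s \<noteq> 0")
      case False
      have "\<forall>i<N. \<forall>j<N. (i \<notin> F \<or> j \<notin> F) \<longrightarrow> C i j = 0"
      proof (intro allI impI)
        fix i j assume ij: "i < N" "j < N" "i \<notin> F \<or> j \<notin> F"
        show "C i j = 0"
        proof (cases "i = s \<or> j = s")
          case True
          then have sN: "s < N" "C s s = 0" using False ij by auto
          have "C s j = 0" "C s i = 0" using psdf_zero_row[OF p sN(1) _ sN(2)] ij by auto
          then show ?thesis using True psdf_herm[OF p ij(1,2)] by auto
        next
          case False
          then show ?thesis using sup[OF ij(1,2)] ij(3) by blast
        qed
      qed
      from insert.IH[rule_format, OF conjI[OF p this]] show ?thesis .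
    next
      case True
      then have sN: "s < N" and cs: "C s s \<noteq> 0" by auto
      define C' where "C' = (\<lambda>i j. C i j - C i s * C s j / C s s)"
      have p': "psdf N C'" unfolding C'_def by (rule psdf_schur[OF p sN cs])
      have "\<forall>i<N. \<forall>j<N. (i \<notin> F \<or> j \<notin> F) \<longrightarrow> C' i j = 0"
      proof (intro allI impI)
        fix i j assume ij: "i < N" "j < N" "i \<notin> F \<or> j \<notin> F"
        show "C' i j = 0"
        proof (cases "i = s \<or> j = s")
          case True
          then show ?thesis unfolding C'_def using cs by auto
        next
          case False
          have "C i j = 0" using sup[OF ij(1,2)] ij(3) False by blast
          moreover have "C i s = 0 \<or> C s j = 0" using sup[OF ij(1) sN] sup[OF sN ij(2)] ij(3) False by blast
          ultimately show ?thesis unfolding C'_def by auto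
        qed
      qed
      from insert.IH[rule_format, OF conjI[OF p' this]] obtain r :: nat and w where rw: "\<forall>i<N. \<forall>j<N. C' i j = (\<Sum>k<r. w k i * cnj (w k j))"
        by blast
      have re: "C s s = complex_of_real (Re (C s s))" "Re (C s s) \<ge> 0"
        using psdf_diag[OF p sN] by (auto simp: complex_eq_iff)
      define g where "g = (\<lambda>i. C i s / complex_of_real (sqrt (Re (C s s))))"
      define w' where "w' = (\<lambda>k. if k < r then w k else g)"
      have "\<forall>i<N. \<forall>j<N. C i j = (\<Sum>k<Suc r. w' k i * cnj (w' k j))"
      proof (intro allI impI)
        fix i j assume ij: "i < N" "j < N"
        have h: "C s j = cnj (C j s)" using psdf_herm[OF p sN ij(2)] .
        have "g i * cnj (g j) = C i s * C s j / C s s"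
        proof -
          have "g i * cnj (g j) = C i s * cnj (C j s) / (complex_of_real (sqrt (Re (C s s))) * complex_of_real (sqrt (Re (C s s))))"
            unfolding g_def by simp
          also have "complex_of_real (sqrt (Re (C s s))) * complex_of_real (sqrt (Re (C s s))) = C s s"
            using re(2) by (simp flip: of_real_mult add: re(1)[symmetric])
          finally show ?thesis using h by simp
        qed
        moreover have "(\<Sum>k<r. w' k i * cnj (w' k j)) = (\<Sum>k<r. w k i * cnj (w k j))"
          unfolding w'_def by simp
        moreover have "(\<Sum>k<Suc r. w' k i * cnj (w' k j)) = (\<Sum>k<r. w' k i * cnj (w' k j)) + g i * cnj (g j)"
          by (simp add: w'_def)
        ultimately have "(\<Sum>k<Suc r. w' k i * cnj (w' k j)) = C' i j + C i s * C s j / C s s"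
          using rw ij by simp
        then show "C i j = (\<Sum>k<Suc r. w' k i * cnj (w' k j))" unfolding C'_def by simp
      qed
      then show ?thesis by (intro exI[of _ "Suc r"] exI[of _ w'])
    qed
  qed
qed

lemma psdf_decomp:
  assumes "psdf N C"
  shows "\<exists>(r::nat) w. \<forall>i<N. \<forall>j<N. C i j = (\<Sum>k<r. w k i * cnj (w k j))"
  using decomp_aux[of "{..<N}" N] assms by auto

lemma ket_bra_carrier[simp]: "ket_bra m b d \<in> carrier_mat m m"
  unfolding ket_bra_def by simp

lemma ket_bra_dims[simp]: "dim_row (ket_bra m b d) = m" "dim_col (ket_bra m b d) = m"
  unfolding ket_bra_def by simp_all

lemma ket_bra_index[simp]: "i < m \<Longrightarrow> j < m \<Longrightarrow> ket_bra m b d $$ (i, j) = (if i = b \<and> j = d then 1 else 0)"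
  unfolding ket_bra_def by simp

lemma dephase_carrier[simp]: "A \<in> carrier_mat k l \<Longrightarrow> dephase A \<in> carrier_mat k l"
  unfolding dephase_def by auto

lemma dephase_dims[simp]: "dim_row (dephase A) = dim_row A" "dim_col (dephase A) = dim_col A"
  unfolding dephase_def by auto

lemma dephase_index[simp]: "i < dim_row A \<Longrightarrow> j < dim_col A \<Longrightarrow> dephase A $$ (i, j) = (if i = j then A $$ (i, j) else 0)"
  unfolding dephase_def by simp

lemma dephase_idem: "dephase (dephase A) = dephase A"
  by (rule eq_matI) auto

lemma lin_carrier: "linear_map_mat m n \<Phi> \<Longrightarrow> A \<in> carrier_mat m m \<Longrightarrow> \<Phi> A \<in> carrier_mat n n"
  unfolding linear_map_mat_def by blast

lemma lin_add: "linear_map_mat m n \<Phi> \<Longrightarrow> A \<in> carrier_mat m m \<Longrightarrow> B \<in> carrier_mat m m \<Longrightarrow> \<Phi> (A + B) = \<Phi> A + \<Phi> B"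
  unfolding linear_map_mat_def by blast

lemma lin_smult: "linear_map_mat m n \<Phi> \<Longrightarrow> A \<in> carrier_mat m m \<Longrightarrow> \<Phi> (x \<cdot>\<^sub>m A) = x \<cdot>\<^sub>m \<Phi> A"
  unfolding linear_map_mat_def by blast

lemma lin_expand_aux:
  assumes lin: "linear_map_mat m n \<Phi>" and A: "A \<in> carrier_mat m m" and a: "a < n" and c: "c < n"
    and fin: "finite S"
  shows "S \<subseteq> {..<m} \<times> {..<m} \<Longrightarrow>
    \<Phi> (mat m m (\<lambda>x. if x \<in> S then A $$ x else 0)) $$ (a, c) = (\<Sum>x\<in>S. A $$ x * coeff m \<Phi> (fst x) (snd x) a c)"
  using fin
proof (induction S rule: finite_induct)
  case empty
  have z: "mat m m (\<lambda>x. if x \<in> {} then A $$ x else 0) = 0 \<cdot>\<^sub>m (0\<^sub>m m m :: complex mat)"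
    by (rule eq_matI) auto
  have "\<Phi> (0 \<cdot>\<^sub>m (0\<^sub>m m m :: complex mat)) = 0 \<cdot>\<^sub>m \<Phi> (0\<^sub>m m m)"
    using lin_smult[OF lin, of "0\<^sub>m m m"] by simp
  then have e: "\<Phi> (0\<^sub>m m m) = 0 \<cdot>\<^sub>m \<Phi> (0\<^sub>m m m)" by simp
  have "\<Phi> (0\<^sub>m m m) \<in> carrier_mat n n" using lin_carrier[OF lin] by simp
  then have "(0 \<cdot>\<^sub>m \<Phi> (0\<^sub>m m m)) $$ (a, c) = 0" using a c by simp
  then have "\<Phi> (0\<^sub>m m m) $$ (a, c) = 0" using e by metis
  then show ?case unfolding z using e by simp
next
  case (insert x F)
  obtain b d where x: "x = (b, d)" by (cases x)
  have bd: "b < m" "d < m" using insert.prems x by auto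
  have eq: "mat m m (\<lambda>y. if y \<in> insert x F then A $$ y else 0)
      = mat m m (\<lambda>y. if y \<in> F then A $$ y else 0) + A $$ x \<cdot>\<^sub>m ket_bra m b d"
    by (rule eq_matI) (use insert.hyps x in auto)
  have "\<Phi> (mat m m (\<lambda>y. if y \<in> insert x F then A $$ y else 0))
     = \<Phi> (mat m m (\<lambda>y. if y \<in> F then A $$ y else 0)) + A $$ x \<cdot>\<^sub>m \<Phi> (ket_bra m b d)"
    unfolding eq by (subst lin_add[OF lin]) (auto simp: lin_smult[OF lin])
  moreover have "\<Phi> (mat m m (\<lambda>y. if y \<in> F then A $$ y else 0)) \<in> carrier_mat n n"
    by (rule lin_carrier[OF lin]) simp
  moreover have "\<Phi> (ket_bra m b d) \<in> carrier_mat n n" by (rule lin_carrier[OF lin]) simp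
  ultimately have "\<Phi> (mat m m (\<lambda>y. if y \<in> insert x F then A $$ y else 0)) $$ (a, c)
     = \<Phi> (mat m m (\<lambda>y. if y \<in> F then A $$ y else 0)) $$ (a, c) + A $$ x * coeff m \<Phi> b d a c"
    using a c unfolding coeff_def by simp
  then show ?case using insert x by simp
qed

lemma lin_expand:
  assumes lin: "linear_map_mat m n \<Phi>" and A: "A \<in> carrier_mat m m" and a: "a < n" and c: "c < n"
  shows "\<Phi> A $$ (a, c) = (\<Sum>b<m. \<Sum>d<m. A $$ (b, d) * coeff m \<Phi> b d a c)"
proof -
  have eq: "mat m m (\<lambda>x. if x \<in> {..<m} \<times> {..<m} then A $$ x else 0) = A"
    by (rule eq_matI) (use A in auto)
  have "\<Phi> A $$ (a, c) = (\<Sum>x\<in>{..<m} \<times> {..<m}. A $$ x * coeff m \<Phi> (fst x) (snd x) a c)"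
    using lin_expand_aux[OF lin A a c, of "{..<m} \<times> {..<m}"] unfolding eq by simp
  also have "\<dots> = (\<Sum>b<m. \<Sum>d<m. A $$ (b, d) * coeff m \<Phi> b d a c)"
    by (simp add: sum.cartesian_product split_def)
  finally show ?thesis .
qed

lemma qf_mat:
  assumes "A \<in> carrier_mat N N" "v \<in> carrier_vec N"
  shows "(A *\<^sub>v v) \<bullet>c v = qf N (\<lambda>i j. A $$ (i, j)) (\<lambda>i. v $ i)"
  using assms unfolding qf_alt scalar_prod_def mult_mat_vec_def
  by (auto simp: atLeast0LessThan mult.commute intro!: sum.cong)

lemma psd_psdf: "psd N A \<Longrightarrow> psdf N (\<lambda>i j. A $$ (i, j))"
  unfolding psd_def psdf_def
proof (intro allI, elim conjE)
  fix v assume A: "A \<in> carrier_mat N N" and h: "\<forall>v\<in>carrier_vec N. 0 \<le> (A *\<^sub>v v) \<bullet>c v"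
  have "0 \<le> (A *\<^sub>v vec N v) \<bullet>c vec N v" using h by simp
  also have "(A *\<^sub>v vec N v) \<bullet>c vec N v = qf N (\<lambda>i j. A $$ (i, j)) (\<lambda>i. vec N v $ i)"
    using qf_mat[OF A] by simp
  also have "\<dots> = qf N (\<lambda>i j. A $$ (i, j)) v" unfolding qf_def by (intro sum.cong) auto
  finally show "0 \<le> qf N (\<lambda>i j. A $$ (i, j)) v" .
qed

lemma psdf_psd: "A \<in> carrier_mat N N \<Longrightarrow> psdf N (\<lambda>i j. A $$ (i, j)) \<Longrightarrow> psd N A"
  unfolding psd_def psdf_def using qf_mat by auto

lemma mtrace_ket_bra: "b < m \<Longrightarrow> d < m \<Longrightarrow> mtrace (ket_bra m b d) = (if b = d then 1 else 0)"
proof -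
  assume bd: "b < m" "d < m"
  have "mtrace (ket_bra m b d) = (\<Sum>i<m. if i = b \<and> i = d then 1 else 0)"
    unfolding mtrace_def by (intro sum.cong) auto
  also have "\<dots> = (if b = d then 1 else 0)" using bd by (cases "b = d") (auto intro: sum.neutral)
  finally show ?thesis .
qed

lemma TP_iff:
  assumes lin: "linear_map_mat m n \<Phi>"
  shows "trace_preserving m \<Phi> \<longleftrightarrow> (\<forall>b<m. \<forall>d<m. (\<Sum>a<n. coeff m \<Phi> b d a a) = (if b = d then 1 else 0))"
proof
  assume tp: "trace_preserving m \<Phi>"
  show "\<forall>b<m. \<forall>d<m. (\<Sum>a<n. coeff m \<Phi> b d a a) = (if b = d then 1 else 0)"
  proof (intro allI impI)
    fix b d assume bd: "b < m" "d < m"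
    have c: "\<Phi> (ket_bra m b d) \<in> carrier_mat n n" by (rule lin_carrier[OF lin]) simp
    have "(\<Sum>a<n. coeff m \<Phi> b d a a) = mtrace (\<Phi> (ket_bra m b d))"
      unfolding mtrace_def coeff_def using c by simp
    also have "\<dots> = mtrace (ket_bra m b d)" using tp unfolding trace_preserving_def by simp
    finally show "(\<Sum>a<n. coeff m \<Phi> b d a a) = (if b = d then 1 else 0)" using mtrace_ket_bra bd by simp
  qed
next
  assume h: "\<forall>b<m. \<forall>d<m. (\<Sum>a<n. coeff m \<Phi> b d a a) = (if b = d then 1 else 0)"
  show "trace_preserving m \<Phi>" unfolding trace_preserving_def
  proof
    fix A :: "complex mat" assume A: "A \<in> carrier_mat m m"
    have c: "\<Phi> A \<in> carrier_mat n n" by (rule lin_carrier[OF lin A])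
    have "mtrace (\<Phi> A) = (\<Sum>a<n. \<Sum>b<m. \<Sum>d<m. A $$ (b, d) * coeff m \<Phi> b d a a)"
      unfolding mtrace_def using c lin_expand[OF lin A] by simp
    also have "\<dots> = (\<Sum>b<m. \<Sum>a<n. \<Sum>d<m. A $$ (b, d) * coeff m \<Phi> b d a a)"
      by (rule sum.swap)
    also have "\<dots> = (\<Sum>b<m. \<Sum>d<m. \<Sum>a<n. A $$ (b, d) * coeff m \<Phi> b d a a)"
      by (intro sum.cong refl sum.swap)
    also have "\<dots> = (\<Sum>b<m. \<Sum>d<m. A $$ (b, d) * (if b = d then 1 else 0))"
      using h by (simp add: sum_distrib_left[symmetric])
    also have "\<dots> = (\<Sum>b<m. A $$ (b, b))"
      by (intro sum.cong refl) (simp add: if_distrib cong: if_cong)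
    also have "\<dots> = mtrace A" unfolding mtrace_def using A by simp
    finally show "mtrace (\<Phi> A) = mtrace A" .
  qed
qed

lemma DI_iff:
  assumes lin: "linear_map_mat m n \<Phi>"
  shows "detection_incoherent m \<Phi> \<longleftrightarrow> (\<forall>a<n. \<forall>b<m. \<forall>d<m. b \<noteq> d \<longrightarrow> coeff m \<Phi> b d a a = 0)"
proof
  assume di: "detection_incoherent m \<Phi>"
  show "\<forall>a<n. \<forall>b<m. \<forall>d<m. b \<noteq> d \<longrightarrow> coeff m \<Phi> b d a a = 0"
  proof (intro allI impI)
    fix a b d assume h: "a < n" "b < m" "d < m" "b \<noteq> d"
    let ?A = "ket_bra m b d"
    have c1: "\<Phi> ?A \<in> carrier_mat n n" by (rule lin_carrier[OF lin]) simp
    have dA: "dephase ?A \<in> carrier_mat m m" by simp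
    have c2: "\<Phi> (dephase ?A) \<in> carrier_mat n n" by (rule lin_carrier[OF lin dA])
    have "coeff m \<Phi> b d a a = dephase (\<Phi> ?A) $$ (a, a)" unfolding coeff_def using c1 h by simp
    also have "\<dots> = dephase (\<Phi> (dephase ?A)) $$ (a, a)" using di unfolding detection_incoherent_def by simp
    also have "\<dots> = (\<Sum>b'<m. \<Sum>d'<m. dephase ?A $$ (b', d') * coeff m \<Phi> b' d' a a)"
      using c2 h lin_expand[OF lin dA] by simp
    also have "\<dots> = 0" using h by (intro sum.neutral ballI) auto
    finally show "coeff m \<Phi> b d a a = 0" .
  qed
next
  assume h: "\<forall>a<n. \<forall>b<m. \<forall>d<m. b \<noteq> d \<longrightarrow> coeff m \<Phi> b d a a = 0"
  show "detection_incoherent m \<Phi>" unfolding detection_incoherent_def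
  proof
    fix A :: "complex mat" assume A: "A \<in> carrier_mat m m"
    have dA: "dephase A \<in> carrier_mat m m" using A by simp
    have c1: "\<Phi> A \<in> carrier_mat n n" by (rule lin_carrier[OF lin A])
    have c2: "\<Phi> (dephase A) \<in> carrier_mat n n" by (rule lin_carrier[OF lin dA])
    show "dephase (\<Phi> A) = dephase (\<Phi> (dephase A))"
    proof (rule eq_matI)
      fix i j assume ij: "i < dim_row (dephase (\<Phi> (dephase A)))" "j < dim_col (dephase (\<Phi> (dephase A)))"
      then have ij': "i < n" "j < n" using c2 by auto
      show "dephase (\<Phi> A) $$ (i, j) = dephase (\<Phi> (dephase A)) $$ (i, j)"
      proof (cases "i = j")
        case True
        have "\<Phi> A $$ (i, i) = \<Phi> (dephase A) $$ (i, i)"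
          unfolding lin_expand[OF lin A ij'(1) ij'(1)] lin_expand[OF lin dA ij'(1) ij'(1)]
          using h ij' A by (intro sum.cong refl) auto
        then show ?thesis using True c1 c2 ij' by simp
      qed (use c1 c2 ij' in simp)
    qed (use c1 c2 in auto)
  qed
qed

lemma CI_iff:
  assumes lin: "linear_map_mat m n \<Phi>"
  shows "creation_incoherent m \<Phi> \<longleftrightarrow> (\<forall>a<m. \<forall>b<n. \<forall>c<n. b \<noteq> c \<longrightarrow> coeff m \<Phi> a a b c = 0)"
proof
  assume ci: "creation_incoherent m \<Phi>"
  show "\<forall>a<m. \<forall>b<n. \<forall>c<n. b \<noteq> c \<longrightarrow> coeff m \<Phi> a a b c = 0"
  proof (intro allI impI)
    fix a b c assume h: "a < m" "b < n" "c < n" "b \<noteq> c"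
    let ?A = "ket_bra m a a"
    have dA: "dephase ?A = ?A" by (rule eq_matI) auto
    have c1: "\<Phi> ?A \<in> carrier_mat n n" by (rule lin_carrier[OF lin]) simp
    have "\<Phi> ?A = dephase (\<Phi> ?A)" using ci dA unfolding creation_incoherent_def
      by (metis ket_bra_carrier)
    then have "coeff m \<Phi> a a b c = dephase (\<Phi> ?A) $$ (b, c)" unfolding coeff_def by simp
    also have "\<dots> = 0" using c1 h by simp
    finally show "coeff m \<Phi> a a b c = 0" .
  qed
next
  assume h: "\<forall>a<m. \<forall>b<n. \<forall>c<n. b \<noteq> c \<longrightarrow> coeff m \<Phi> a a b c = 0"
  show "creation_incoherent m \<Phi>" unfolding creation_incoherent_def
  proof
    fix A :: "complex mat" assume A: "A \<in> carrier_mat m m"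
    have dA: "dephase A \<in> carrier_mat m m" using A by simp
    have c2: "\<Phi> (dephase A) \<in> carrier_mat n n" by (rule lin_carrier[OF lin dA])
    show "\<Phi> (dephase A) = dephase (\<Phi> (dephase A))"
    proof (rule eq_matI)
      fix i j assume ij: "i < dim_row (dephase (\<Phi> (dephase A)))" "j < dim_col (dephase (\<Phi> (dephase A)))"
      then have ij': "i < n" "j < n" using c2 by auto
      show "\<Phi> (dephase A) $$ (i, j) = dephase (\<Phi> (dephase A)) $$ (i, j)"
      proof (cases "i = j")
        case False
        have "\<Phi> (dephase A) $$ (i, j) = 0"
          unfolding lin_expand[OF lin dA ij'(1) ij'(2)]
          using h ij' A False by (intro sum.neutral ballI) auto
        then show ?thesis using False c2 ij' by simp
      qed (use c2 ij' in simp)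
    qed (use c2 in auto)
  qed
qed

lemma DCI_iff:
  assumes lin: "linear_map_mat m n \<Phi>"
  shows "detection_creation_incoherent m \<Phi> \<longleftrightarrow> detection_incoherent m \<Phi> \<and> creation_incoherent m \<Phi>"
  unfolding detection_creation_incoherent_def detection_incoherent_def creation_incoherent_def
  by (metis dephase_idem dephase_carrier)

lemma kraus_pos:
  assumes K: "\<forall>a < n. \<forall>b < m. \<forall>c < n. \<forall>d < m.
                 coeff m \<Phi> b d a c = (\<Sum>i < r. K i $$ (a, b) * cnj (K i $$ (c, d)))"
    and a: "a < n" and b: "b < m"
  shows "coeff m \<Phi> b b a a = complex_of_real (Re (coeff m \<Phi> b b a a))" "Re (coeff m \<Phi> b b a a) \<ge> 0"
proof -
  have "coeff m \<Phi> b b a a = (\<Sum>i < r. K i $$ (a, b) * cnj (K i $$ (a, b)))" using K a b by blast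
  also have "\<dots> = complex_of_real (\<Sum>i < r. (cmod (K i $$ (a, b)))\<^sup>2)"
    by (simp add: complex_norm_square del: of_real_power flip: of_real_power)
  finally have e: "coeff m \<Phi> b b a a = complex_of_real (\<Sum>i < r. (cmod (K i $$ (a, b)))\<^sup>2)" .
  then show "coeff m \<Phi> b b a a = complex_of_real (Re (coeff m \<Phi> b b a a))" by simp
  show "Re (coeff m \<Phi> b b a a) \<ge> 0" unfolding e by (simp add: sum_nonneg)
qed

lemma sum_lessThan_add_nat: "(\<Sum>p<a+b. f p) = (\<Sum>p<a. f p) + (\<Sum>p<b. f (a + p))"
  for f :: "nat \<Rightarrow> complex"
  by (induction b) (simp_all add: add.assoc)

lemma sum_split: "(\<Sum>p<k*n. f p) = (\<Sum>x<k. \<Sum>a<n. f (x*n + a))"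
  for f :: "nat \<Rightarrow> complex"
proof (induction k)
  case (Suc k)
  have "(\<Sum>p<Suc k * n. f p) = (\<Sum>p<k*n + n. f p)" by (simp add: add.commute)
  also have "\<dots> = (\<Sum>p<k*n. f p) + (\<Sum>a<n. f (k*n + a))" by (rule sum_lessThan_add_nat)
  finally show ?case using Suc by simp
qed simp

lemma divmod_aux: "b < (m::nat) \<Longrightarrow> (x*m+b) div m = x" "b < (m::nat) \<Longrightarrow> (x*m+b) mod m = b"
  by simp_all

lemma qf_cong: "(\<And>p q. p < N \<Longrightarrow> q < N \<Longrightarrow> C p q = D p q) \<Longrightarrow> qf N C v = qf N D v"
  unfolding qf_def by (intro sum.cong refl) auto

lemma qf_sum: "qf N (\<lambda>p q. \<Sum>i<r. A i p q) v = (\<Sum>i<r. qf N (A i) v)"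
proof -
  have "qf N (\<lambda>p q. \<Sum>i<r. A i p q) v = (\<Sum>p<N. \<Sum>q<N. \<Sum>i<r. cnj (v p) * A i p q * v q)"
    unfolding qf_def by (simp add: sum_distrib_left sum_distrib_right)
  also have "\<dots> = (\<Sum>p<N. \<Sum>i<r. \<Sum>q<N. cnj (v p) * A i p q * v q)"
    by (intro sum.cong refl sum.swap)
  also have "\<dots> = (\<Sum>i<r. \<Sum>p<N. \<Sum>q<N. cnj (v p) * A i p q * v q)"
    by (rule sum.swap)
  finally show ?thesis unfolding qf_def .
qed

lemma sum_collapse:
  fixes h :: "nat \<Rightarrow> complex"
  assumes "x < k"
  shows "(\<Sum>P<k*m. if P div m = x then h P else 0) = (\<Sum>b<m. h (x*m + b))"
proof -
  have "(\<Sum>P<k*m. if P div m = x then h P else 0) = (\<Sum>x'<k. \<Sum>b<m. if (x'*m+b) div m = x then h (x'*m+b) else 0)"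
    by (rule sum_split)
  also have "\<dots> = (\<Sum>x'<k. \<Sum>b<m. if x' = x then h (x'*m+b) else 0)"
    by (intro sum.cong refl) (simp add: divmod_aux)
  also have "\<dots> = (\<Sum>x'<k. if x' = x then (\<Sum>b<m. h (x'*m+b)) else 0)"
    by (intro sum.cong refl) simp
  also have "\<dots> = (\<Sum>b<m. h (x*m + b))" using assms by simp
  finally show ?thesis .
qed

lemma sandwich: "c * (\<Sum>P<M. \<Sum>Q<M. g P Q) * d = (\<Sum>P<M. \<Sum>Q<M. c * g P Q * d)"
  for c d :: complex
  by (simp add: sum_distrib_left sum_distrib_right)

lemma sandwich2: "(\<Sum>p<N. a p) * x * (\<Sum>q<N. b q) = (\<Sum>p<N. \<Sum>q<N. a p * x * b q)"
  for x :: complex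
  by (simp add: sum_distrib_left sum_distrib_right) (rule sum.swap)

lemma qf_conj:
  "qf N (\<lambda>p q. \<Sum>P<M. \<Sum>Q<M. B p P * X P Q * cnj (B q Q)) v = qf M X (\<lambda>P. \<Sum>p<N. cnj (B p P) * v p)"
proof -
  define F where "F = (\<lambda>p q P Q. cnj (v p) * (B p P * X P Q * cnj (B q Q)) * v q)"
  have "qf N (\<lambda>p q. \<Sum>P<M. \<Sum>Q<M. B p P * X P Q * cnj (B q Q)) v = (\<Sum>p<N. \<Sum>q<N. \<Sum>P<M. \<Sum>Q<M. F p q P Q)"
    unfolding qf_def F_def sandwich ..
  also have "\<dots> = (\<Sum>p<N. \<Sum>P<M. \<Sum>q<N. \<Sum>Q<M. F p q P Q)"
    by (intro sum.cong refl sum.swap)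
  also have "\<dots> = (\<Sum>P<M. \<Sum>p<N. \<Sum>q<N. \<Sum>Q<M. F p q P Q)"
    by (rule sum.swap)
  also have "\<dots> = (\<Sum>P<M. \<Sum>p<N. \<Sum>Q<M. \<Sum>q<N. F p q P Q)"
    by (intro sum.cong refl sum.swap)
  also have "\<dots> = (\<Sum>P<M. \<Sum>Q<M. \<Sum>p<N. \<Sum>q<N. F p q P Q)"
    by (intro sum.cong refl sum.swap)
  also have "\<dots> = (\<Sum>P<M. \<Sum>Q<M. (\<Sum>p<N. B p P * cnj (v p)) * X P Q * (\<Sum>q<N. cnj (B q Q) * v q))"
    unfolding sandwich2 F_def by (intro sum.cong refl) (simp add: mult_ac)
  also have "\<dots> = qf M X (\<lambda>P. \<Sum>p<N. cnj (B p P) * v p)"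
    unfolding qf_def by (simp add: cnj_sum)
  finally show ?thesis .
qed

lemma idx_aux: "x < (k::nat) \<Longrightarrow> b < m \<Longrightarrow> x*m + b < k*m"
proof -
  assume a: "x < k" "b < m"
  have "Suc x * m \<le> k * m" using a(1) by (intro mult_le_mono1) simp
  then show ?thesis using a(2) by simp
qed

lemma kraus_cp:
  assumes lin: "linear_map_mat m n \<Phi>"
    and K: "\<forall>a<n. \<forall>b<m. \<forall>c<n. \<forall>d<m. coeff m \<Phi> b d a c = (\<Sum>i<r. K i $$ (a, b) * cnj (K i $$ (c, d)))"
  shows "completely_positive m n \<Phi>"
  unfolding completely_positive_def
proof (intro allI impI)
  fix k X assume X: "psd (k*m) X"
  define X' where "X' = (\<lambda>P Q. X $$ (P, Q))"
  have Xp: "psdf (k*m) X'" using psd_psdf[OF X] unfolding X'_def .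
  define Amp where "Amp = ampliation k m n \<Phi> X"
  have Ac: "Amp \<in> carrier_mat (k*n) (k*n)" unfolding Amp_def ampliation_def by simp
  define B where "B = (\<lambda>i p P. if P div m = p div n then K i $$ (p mod n, P mod m) else 0)"
  have entry: "Amp $$ (p, q) = (\<Sum>i<r. \<Sum>P<k*m. \<Sum>Q<k*m. B i p P * X' P Q * cnj (B i q Q))"
    if pq: "p < k*n" "q < k*n" for p q
  proof -
    define x where "x = p div n"
    define y where "y = q div n"
    define a where "a = p mod n"
    define c where "c = q mod n"
    have n0: "n > 0" using pq by (cases n) auto
    have xy: "x < k" "y < k" "a < n" "c < n"
      using pq n0 unfolding x_def y_def a_def c_def by (auto simp: less_mult_imp_div_less)
    define Y where "Y = mat m m (\<lambda>(b, d). X $$ (x*m + b, y*m + d))"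
    have Yc: "Y \<in> carrier_mat m m" unfolding Y_def by simp
    have "Amp $$ (p, q) = \<Phi> Y $$ (a, c)"
      unfolding Amp_def ampliation_def Y_def x_def y_def a_def c_def using pq by simp
    also have "\<dots> = (\<Sum>b<m. \<Sum>d<m. Y $$ (b, d) * coeff m \<Phi> b d a c)"
      by (rule lin_expand[OF lin Yc xy(3,4)])
    also have "\<dots> = (\<Sum>b<m. \<Sum>d<m. \<Sum>i<r. K i $$ (a, b) * X' (x*m+b) (y*m+d) * cnj (K i $$ (c, d)))"
    proof (intro sum.cong refl)
      fix b d assume bd: "b \<in> {..<m}" "d \<in> {..<m}"
      have "Y $$ (b, d) * coeff m \<Phi> b d a c = X' (x*m+b) (y*m+d) * (\<Sum>i<r. K i $$ (a, b) * cnj (K i $$ (c, d)))"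
        using bd xy K unfolding Y_def X'_def by simp
      also have "\<dots> = (\<Sum>i<r. K i $$ (a, b) * X' (x*m+b) (y*m+d) * cnj (K i $$ (c, d)))"
        by (simp add: sum_distrib_left mult_ac)
      finally show "Y $$ (b, d) * coeff m \<Phi> b d a c = (\<Sum>i<r. K i $$ (a, b) * X' (x*m+b) (y*m+d) * cnj (K i $$ (c, d)))" .
    qed
    also have "\<dots> = (\<Sum>b<m. \<Sum>i<r. \<Sum>d<m. K i $$ (a, b) * X' (x*m+b) (y*m+d) * cnj (K i $$ (c, d)))"
      by (intro sum.cong refl sum.swap)
    also have "\<dots> = (\<Sum>i<r. \<Sum>b<m. \<Sum>d<m. K i $$ (a, b) * X' (x*m+b) (y*m+d) * cnj (K i $$ (c, d)))"
      by (rule sum.swap)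
    also have "\<dots> = (\<Sum>i<r. \<Sum>P<k*m. \<Sum>Q<k*m. B i p P * X' P Q * cnj (B i q Q))"
    proof (rule sum.cong[OF refl])
      fix i
      have "(\<Sum>P<k*m. \<Sum>Q<k*m. B i p P * X' P Q * cnj (B i q Q))
          = (\<Sum>P<k*m. if P div m = x then (\<Sum>Q<k*m. if Q div m = y then K i $$ (a, P mod m) * X' P Q * cnj (K i $$ (c, Q mod m)) else 0) else 0)"
        unfolding B_def x_def y_def a_def c_def by (intro sum.cong refl) (auto intro!: sum.cong)
      also have "\<dots> = (\<Sum>b<m. (\<Sum>Q<k*m. if Q div m = y then K i $$ (a, (x*m+b) mod m) * X' (x*m+b) Q * cnj (K i $$ (c, Q mod m)) else 0))"
        by (rule sum_collapse[OF xy(1)])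
      also have "\<dots> = (\<Sum>b<m. \<Sum>d<m. K i $$ (a, (x*m+b) mod m) * X' (x*m+b) (y*m+d) * cnj (K i $$ (c, (y*m+d) mod m)))"
        by (intro sum.cong refl sum_collapse[OF xy(2)])
      also have "\<dots> = (\<Sum>b<m. \<Sum>d<m. K i $$ (a, b) * X' (x*m+b) (y*m+d) * cnj (K i $$ (c, d)))"
        by (intro sum.cong refl) (simp add: divmod_aux)
      finally show "(\<Sum>b<m. \<Sum>d<m. K i $$ (a, b) * X' (x*m+b) (y*m+d) * cnj (K i $$ (c, d)))
          = (\<Sum>P<k*m. \<Sum>Q<k*m. B i p P * X' P Q * cnj (B i q Q))" by simp
    qed
    finally show ?thesis .
  qed
  have "psdf (k*n) (\<lambda>p q. Amp $$ (p, q))"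
    unfolding psdf_def
  proof
    fix v
    have "qf (k*n) (\<lambda>p q. Amp $$ (p, q)) v
        = qf (k*n) (\<lambda>p q. \<Sum>i<r. \<Sum>P<k*m. \<Sum>Q<k*m. B i p P * X' P Q * cnj (B i q Q)) v"
      by (rule qf_cong) (simp add: entry)
    also have "\<dots> = (\<Sum>i<r. qf (k*n) (\<lambda>p q. \<Sum>P<k*m. \<Sum>Q<k*m. B i p P * X' P Q * cnj (B i q Q)) v)"
      by (rule qf_sum)
    also have "\<dots> = (\<Sum>i<r. qf (k*m) X' (\<lambda>P. \<Sum>p<k*n. cnj (B i p P) * v p))"
      by (simp add: qf_conj)
    finally show "0 \<le> qf (k*n) (\<lambda>p q. Amp $$ (p, q)) v"
      using Xp unfolding psdf_def by (simp add: sum_nonneg)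
  qed
  then show "psd (k*n) (ampliation k m n \<Phi> X)" using psdf_psd[OF Ac] unfolding Amp_def by simp
qed

lemma cp_kraus:
  assumes lin: "linear_map_mat m n \<Phi>" and cp: "completely_positive m n \<Phi>"
  shows "\<exists>(r::nat) (K :: nat \<Rightarrow> complex mat). (\<forall>i < r. K i \<in> carrier_mat n m) \<and>
              (\<forall>a < n. \<forall>b < m. \<forall>c < n. \<forall>d < m.
                 coeff m \<Phi> b d a c = (\<Sum>i < r. K i $$ (a, b) * cnj (K i $$ (c, d))))"
proof -
  define e where "e = (\<lambda>P::nat. if P div m = P mod m then (1::complex) else 0)"
  define X0 where "X0 = mat (m*m) (m*m) (\<lambda>(P, Q). e P * e Q)"
  have X0c: "X0 \<in> carrier_mat (m*m) (m*m)" unfolding X0_def by simp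
  have "psdf (m*m) (\<lambda>P Q. X0 $$ (P, Q))"
    unfolding psdf_def
  proof
    fix v
    define S where "S = (\<Sum>Q<m*m. e Q * v Q)"
    have cS: "cnj S = (\<Sum>P<m*m. e P * cnj (v P))" unfolding S_def cnj_sum by (intro sum.cong refl) (simp add: e_def)
    have "qf (m*m) (\<lambda>P Q. X0 $$ (P, Q)) v = qf (m*m) (\<lambda>P Q. e P * e Q) v"
      by (rule qf_cong) (simp add: X0_def)
    also have "\<dots> = cnj S * S"
      unfolding qf_def cS unfolding S_def sum_product by (intro sum.cong refl) (simp add: mult_ac)
    also have "cnj S * S = complex_of_real ((cmod S)\<^sup>2)" by (simp add: complex_norm_square mult.commute del: of_real_power flip: of_real_power)
    finally show "0 \<le> qf (m*m) (\<lambda>P Q. X0 $$ (P, Q)) v" by (simp del: of_real_power add: less_eq_complex_def)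
  qed
  then have "psd (m*m) X0" by (rule psdf_psd[OF X0c])
  then have "psd (m*n) (ampliation m m n \<Phi> X0)" using cp unfolding completely_positive_def by blast
  then have "psdf (m*n) (\<lambda>p q. ampliation m m n \<Phi> X0 $$ (p, q))" by (rule psd_psdf)
  then have "\<exists>(r::nat) w. \<forall>p<m*n. \<forall>q<m*n. ampliation m m n \<Phi> X0 $$ (p, q) = (\<Sum>k<r. w k p * cnj (w k q))"
    by (rule psdf_decomp)
  then obtain r :: nat and w where w: "\<forall>p<m*n. \<forall>q<m*n. ampliation m m n \<Phi> X0 $$ (p, q) = (\<Sum>k<r. w k p * cnj (w k q))"
    by blast
  have amp: "ampliation m m n \<Phi> X0 $$ (p, q) = coeff m \<Phi> (p div n) (q div n) (p mod n) (q mod n)"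
    if pq: "p < m*n" "q < m*n" for p q
  proof -
    have xy: "p div n < m" "q div n < m" using pq by (auto simp: less_mult_imp_div_less)
    have "mat m m (\<lambda>(b, d). X0 $$ ((p div n)*m + b, (q div n)*m + d)) = ket_bra m (p div n) (q div n)"
    proof (rule eq_matI)
      fix b d assume "b < dim_row (ket_bra m (p div n) (q div n))" "d < dim_col (ket_bra m (p div n) (q div n))"
      then have bd: "b < m" "d < m" by simp_all
      have lt: "(p div n)*m + b < m*m" "(q div n)*m + d < m*m" using idx_aux xy bd by auto
      show "mat m m (\<lambda>(b, d). X0 $$ ((p div n)*m + b, (q div n)*m + d)) $$ (b, d) = ket_bra m (p div n) (q div n) $$ (b, d)"
        using bd lt unfolding X0_def e_def by (auto simp: divmod_aux)
    qed simp_all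
    then show ?thesis unfolding ampliation_def coeff_def using pq by simp
  qed
  define K where "K = (\<lambda>i. mat n m (\<lambda>(a, b). w i (b*n + a)))"
  have "\<forall>i < r. K i \<in> carrier_mat n m" unfolding K_def by simp
  moreover have "\<forall>a < n. \<forall>b < m. \<forall>c < n. \<forall>d < m.
                 coeff m \<Phi> b d a c = (\<Sum>i < r. K i $$ (a, b) * cnj (K i $$ (c, d)))"
  proof (intro allI impI)
    fix a b c d assume h: "a < n" "b < m" "c < n" "d < m"
    have p: "b*n+a < m*n" "d*n+c < m*n" using idx_aux h by auto
    have "coeff m \<Phi> b d a c = ampliation m m n \<Phi> X0 $$ (b*n+a, d*n+c)"
      using amp[OF p] h by (simp add: divmod_aux)
    also have "\<dots> = (\<Sum>k<r. w k (b*n+a) * cnj (w k (d*n+c)))" using w p by simp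
    also have "\<dots> = (\<Sum>i < r. K i $$ (a, b) * cnj (K i $$ (c, d)))" unfolding K_def using h by simp
    finally show "coeff m \<Phi> b d a c = (\<Sum>i < r. K i $$ (a, b) * cnj (K i $$ (c, d)))" .
  qed
  ultimately show ?thesis by blast
qed

lemma part_p_fwd:
  assumes lin: "linear_map_mat m n \<Phi>"
    and pos: "\<And>a b. a < n \<Longrightarrow> b < m \<Longrightarrow> coeff m \<Phi> b b a a = complex_of_real (Re (coeff m \<Phi> b b a a)) \<and> Re (coeff m \<Phi> b b a a) \<ge> 0"
    and tp: "trace_preserving m \<Phi>" and di: "detection_incoherent m \<Phi>"
  shows "cond_prob n m (\<lambda>a b. Re (coeff m \<Phi> b b a a)) \<and>
     (\<forall>a < n. \<forall>b < m. \<forall>d < m. coeff m \<Phi> b d a a = (if b = d then complex_of_real (Re (coeff m \<Phi> b b a a)) else 0))"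
proof -
  have T: "\<forall>b<m. \<forall>d<m. (\<Sum>a<n. coeff m \<Phi> b d a a) = (if b = d then 1 else 0)" using tp TP_iff[OF lin] by blast
  have D: "\<forall>a<n. \<forall>b<m. \<forall>d<m. b \<noteq> d \<longrightarrow> coeff m \<Phi> b d a a = 0" using di DI_iff[OF lin] by blast
  have "cond_prob n m (\<lambda>a b. Re (coeff m \<Phi> b b a a))"
    unfolding cond_prob_def
  proof (intro conjI allI impI)
    fix x y assume "x < n" "y < m" then show "0 \<le> Re (coeff m \<Phi> y y x x)" using pos by blast
  next
    fix y assume y: "y < m"
    have "(\<Sum>x<n. Re (coeff m \<Phi> y y x x)) = Re (\<Sum>x<n. coeff m \<Phi> y y x x)" by (simp add: Re_sum)
    also have "\<dots> = 1" using T y by simp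
    finally show "(\<Sum>x<n. Re (coeff m \<Phi> y y x x)) = 1" .
  qed
  moreover have "\<forall>a < n. \<forall>b < m. \<forall>d < m. coeff m \<Phi> b d a a = (if b = d then complex_of_real (Re (coeff m \<Phi> b b a a)) else 0)"
    using D pos by auto
  ultimately show ?thesis by blast
qed

lemma part_p_bwd:
  assumes lin: "linear_map_mat m n \<Phi>" and cp: "cond_prob n m p"
    and h: "\<forall>a < n. \<forall>b < m. \<forall>d < m. coeff m \<Phi> b d a a = (if b = d then complex_of_real (p a b) else 0)"
  shows "trace_preserving m \<Phi> \<and> detection_incoherent m \<Phi>"
proof -
  have "\<forall>b<m. \<forall>d<m. (\<Sum>a<n. coeff m \<Phi> b d a a) = (if b = d then 1 else 0)"
  proof (intro allI impI)
    fix b d assume bd: "b < m" "d < m"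
    have "(\<Sum>a<n. coeff m \<Phi> b d a a) = (\<Sum>a<n. if b = d then complex_of_real (p a b) else 0)"
      using h bd by simp
    also have "\<dots> = (if b = d then 1 else 0)"
    proof (cases "b = d")
      case True
      have "(\<Sum>a<n. complex_of_real (p a b)) = complex_of_real (\<Sum>a<n. p a b)" by simp
      also have "\<dots> = 1" using cp bd unfolding cond_prob_def by simp
      finally show ?thesis using True by simp
    qed simp
    finally show "(\<Sum>a<n. coeff m \<Phi> b d a a) = (if b = d then 1 else 0)" .
  qed
  then have "trace_preserving m \<Phi>" using TP_iff[OF lin] by blast
  moreover have "detection_incoherent m \<Phi>" using DI_iff[OF lin] h by auto
  ultimately show ?thesis by blast
qed

lemma part_q_fwd:
  assumes lin: "linear_map_mat m n \<Phi>"
    and pos: "\<And>a b. a < n \<Longrightarrow> b < m \<Longrightarrow> coeff m \<Phi> b b a a = complex_of_real (Re (coeff m \<Phi> b b a a)) \<and> Re (coeff m \<Phi> b b a a) \<ge> 0"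
    and tp: "trace_preserving m \<Phi>" and ci: "creation_incoherent m \<Phi>"
  shows "cond_prob n m (\<lambda>a b. Re (coeff m \<Phi> b b a a)) \<and>
     (\<forall>a < m. \<forall>b < n. \<forall>c < n. coeff m \<Phi> a a b c = (if b = c then complex_of_real (Re (coeff m \<Phi> a a b b)) else 0))"
proof -
  have T: "\<forall>b<m. \<forall>d<m. (\<Sum>a<n. coeff m \<Phi> b d a a) = (if b = d then 1 else 0)" using tp TP_iff[OF lin] by blast
  have C: "\<forall>a<m. \<forall>b<n. \<forall>c<n. b \<noteq> c \<longrightarrow> coeff m \<Phi> a a b c = 0" using ci CI_iff[OF lin] by blast
  have "cond_prob n m (\<lambda>a b. Re (coeff m \<Phi> b b a a))"
    unfolding cond_prob_def
  proof (intro conjI allI impI)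
    fix x y assume "x < n" "y < m" then show "0 \<le> Re (coeff m \<Phi> y y x x)" using pos by blast
  next
    fix y assume y: "y < m"
    have "(\<Sum>x<n. Re (coeff m \<Phi> y y x x)) = Re (\<Sum>x<n. coeff m \<Phi> y y x x)" by (simp add: Re_sum)
    also have "\<dots> = 1" using T y by simp
    finally show "(\<Sum>x<n. Re (coeff m \<Phi> y y x x)) = 1" .
  qed
  moreover have "\<forall>a < m. \<forall>b < n. \<forall>c < n. coeff m \<Phi> a a b c = (if b = c then complex_of_real (Re (coeff m \<Phi> a a b b)) else 0)"
    using C pos by auto
  ultimately show ?thesis by blast
qed

lemma part_q_bwd:
  assumes lin: "linear_map_mat m n \<Phi>"
    and h: "\<forall>a < m. \<forall>b < n. \<forall>c < n. coeff m \<Phi> a a b c = (if b = c then complex_of_real (q b a) else 0)"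
  shows "creation_incoherent m \<Phi>"
  using CI_iff[OF lin] h by auto

theorem proposition15:
  fixes m n :: nat and \<Phi> :: "complex mat \<Rightarrow> complex mat"
  assumes lin: "linear_map_mat m n \<Phi>"
  shows "(completely_positive m n \<Phi> \<longleftrightarrow>
           (\<exists>(r::nat) (K :: nat \<Rightarrow> complex mat). (\<forall>i < r. K i \<in> carrier_mat n m) \<and>
              (\<forall>a < n. \<forall>b < m. \<forall>c < n. \<forall>d < m.
                 coeff m \<Phi> b d a c = (\<Sum>i < r. K i $$ (a, b) * cnj (K i $$ (c, d))))))
       \<and> (completely_positive m n \<Phi> \<longrightarrow>
           ((quantum_operation m n \<Phi> \<and> detection_incoherent m \<Phi> \<longleftrightarrow>
              (\<exists>p. cond_prob n m p \<and>
                 (\<forall>a < n. \<forall>b < m. \<forall>d < m.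
                    coeff m \<Phi> b d a a = (if b = d then complex_of_real (p a b) else 0))))
            \<and> (quantum_operation m n \<Phi> \<and> creation_incoherent m \<Phi> \<longleftrightarrow>
              (\<exists>p. cond_prob n m p \<and>
                 (\<forall>a < m. \<forall>b < n. \<forall>c < n.
                    coeff m \<Phi> a a b c = (if b = c then complex_of_real (p b a) else 0)) \<and>
                 (\<forall>b < m. \<forall>d < m. (\<Sum>a < n. coeff m \<Phi> b d a a) = (if b = d then 1 else 0))))
            \<and> (quantum_operation m n \<Phi> \<and> detection_creation_incoherent m \<Phi> \<longleftrightarrow>
              (\<exists>p q. cond_prob n m p \<and> cond_prob n m q \<and>
                 (\<forall>a < n. \<forall>b < m. \<forall>d < m.
                    coeff m \<Phi> b d a a = (if b = d then complex_of_real (p a b) else 0)) \<and>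
                 (\<forall>a < m. \<forall>b < n. \<forall>c < n.
                    coeff m \<Phi> a a b c = (if b = c then complex_of_real (q b a) else 0))))))"
proof (intro conjI impI)
  show "completely_positive m n \<Phi> \<longleftrightarrow>
           (\<exists>(r::nat) (K :: nat \<Rightarrow> complex mat). (\<forall>i < r. K i \<in> carrier_mat n m) \<and>
              (\<forall>a < n. \<forall>b < m. \<forall>c < n. \<forall>d < m.
                 coeff m \<Phi> b d a c = (\<Sum>i < r. K i $$ (a, b) * cnj (K i $$ (c, d)))))"
  proof
    assume "completely_positive m n \<Phi>"
    then show "\<exists>(r::nat) (K :: nat \<Rightarrow> complex mat). (\<forall>i < r. K i \<in> carrier_mat n m) \<and>
              (\<forall>a < n. \<forall>b < m. \<forall>c < n. \<forall>d < m.
                 coeff m \<Phi> b d a c = (\<Sum>i < r. K i $$ (a, b) * cnj (K i $$ (c, d))))"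
      by (rule cp_kraus[OF lin])
  next
    assume "\<exists>(r::nat) (K :: nat \<Rightarrow> complex mat). (\<forall>i < r. K i \<in> carrier_mat n m) \<and>
              (\<forall>a < n. \<forall>b < m. \<forall>c < n. \<forall>d < m.
                 coeff m \<Phi> b d a c = (\<Sum>i < r. K i $$ (a, b) * cnj (K i $$ (c, d))))"
    then obtain r :: nat and K :: "nat \<Rightarrow> complex mat" where
      K: "\<forall>a < n. \<forall>b < m. \<forall>c < n. \<forall>d < m. coeff m \<Phi> b d a c = (\<Sum>i < r. K i $$ (a, b) * cnj (K i $$ (c, d)))"
      by blast
    show "completely_positive m n \<Phi>" by (rule kraus_cp[OF lin K])
  qed
next
  assume cp: "completely_positive m n \<Phi>"
  then obtain r :: nat and K :: "nat \<Rightarrow> complex mat" where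
    K: "\<forall>a < n. \<forall>b < m. \<forall>c < n. \<forall>d < m. coeff m \<Phi> b d a c = (\<Sum>i < r. K i $$ (a, b) * cnj (K i $$ (c, d)))"
    using cp_kraus[OF lin cp] by (elim exE conjE) (rule that)
  have pos: "\<And>a b. a < n \<Longrightarrow> b < m \<Longrightarrow> coeff m \<Phi> b b a a = complex_of_real (Re (coeff m \<Phi> b b a a)) \<and> Re (coeff m \<Phi> b b a a) \<ge> 0"
    using kraus_pos[OF K] by blast
  have QO: "quantum_operation m n \<Phi> \<longleftrightarrow> trace_preserving m \<Phi>"
    unfolding quantum_operation_def using lin cp by blast
  show "quantum_operation m n \<Phi> \<and> detection_incoherent m \<Phi> \<longleftrightarrow>
              (\<exists>p. cond_prob n m p \<and>
                 (\<forall>a < n. \<forall>b < m. \<forall>d < m.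
                    coeff m \<Phi> b d a a = (if b = d then complex_of_real (p a b) else 0)))"
  proof
    assume a: "quantum_operation m n \<Phi> \<and> detection_incoherent m \<Phi>"
    then have tp: "trace_preserving m \<Phi>" and di: "detection_incoherent m \<Phi>" using QO by blast+
    show "\<exists>p. cond_prob n m p \<and>
                 (\<forall>a < n. \<forall>b < m. \<forall>d < m.
                    coeff m \<Phi> b d a a = (if b = d then complex_of_real (p a b) else 0))"
      by (rule exI[of _ "\<lambda>a b. Re (coeff m \<Phi> b b a a)"]) (rule part_p_fwd[OF lin pos tp di])
  next
    assume "\<exists>p. cond_prob n m p \<and>
                 (\<forall>a < n. \<forall>b < m. \<forall>d < m.
                    coeff m \<Phi> b d a a = (if b = d then complex_of_real (p a b) else 0))"
    then obtain p where c1: "cond_prob n m p" and h1: "\<forall>a < n. \<forall>b < m. \<forall>d < m.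
                    coeff m \<Phi> b d a a = (if b = d then complex_of_real (p a b) else 0)" by blast
    show "quantum_operation m n \<Phi> \<and> detection_incoherent m \<Phi>"
      using part_p_bwd[OF lin c1 h1] QO by blast
  qed
  show "quantum_operation m n \<Phi> \<and> creation_incoherent m \<Phi> \<longleftrightarrow>
              (\<exists>p. cond_prob n m p \<and>
                 (\<forall>a < m. \<forall>b < n. \<forall>c < n.
                    coeff m \<Phi> a a b c = (if b = c then complex_of_real (p b a) else 0)) \<and>
                 (\<forall>b < m. \<forall>d < m. (\<Sum>a < n. coeff m \<Phi> b d a a) = (if b = d then 1 else 0)))"
  proof
    assume a: "quantum_operation m n \<Phi> \<and> creation_incoherent m \<Phi>"
    then have tp: "trace_preserving m \<Phi>" using QO by blast
    show "\<exists>p. cond_prob n m p \<and>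
                 (\<forall>a < m. \<forall>b < n. \<forall>c < n.
                    coeff m \<Phi> a a b c = (if b = c then complex_of_real (p b a) else 0)) \<and>
                 (\<forall>b < m. \<forall>d < m. (\<Sum>a < n. coeff m \<Phi> b d a a) = (if b = d then 1 else 0))"
    proof (rule exI[of _ "\<lambda>a b. Re (coeff m \<Phi> b b a a)"], intro conjI)
      have ci: "creation_incoherent m \<Phi>" using a by blast
      note q = part_q_fwd[OF lin pos tp ci]
      show "cond_prob n m (\<lambda>a b. Re (coeff m \<Phi> b b a a))" using q by blast
      show "\<forall>a < m. \<forall>b < n. \<forall>c < n.
                    coeff m \<Phi> a a b c = (if b = c then complex_of_real (Re (coeff m \<Phi> a a b b)) else 0)"
        using q by blast
      show "\<forall>b < m. \<forall>d < m. (\<Sum>a < n. coeff m \<Phi> b d a a) = (if b = d then 1 else 0)"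
        using TP_iff[OF lin] tp by blast
    qed
  next
    assume "\<exists>p. cond_prob n m p \<and>
                 (\<forall>a < m. \<forall>b < n. \<forall>c < n.
                    coeff m \<Phi> a a b c = (if b = c then complex_of_real (p b a) else 0)) \<and>
                 (\<forall>b < m. \<forall>d < m. (\<Sum>a < n. coeff m \<Phi> b d a a) = (if b = d then 1 else 0))"
    then obtain p where p: "\<forall>a < m. \<forall>b < n. \<forall>c < n.
                    coeff m \<Phi> a a b c = (if b = c then complex_of_real (p b a) else 0)"
      and t: "\<forall>b < m. \<forall>d < m. (\<Sum>a < n. coeff m \<Phi> b d a a) = (if b = d then 1 else 0)" by blast
    show "quantum_operation m n \<Phi> \<and> creation_incoherent m \<Phi>"
      using part_q_bwd[OF lin p] TP_iff[OF lin] t QO by blast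
  qed
  show "quantum_operation m n \<Phi> \<and> detection_creation_incoherent m \<Phi> \<longleftrightarrow>
              (\<exists>p q. cond_prob n m p \<and> cond_prob n m q \<and>
                 (\<forall>a < n. \<forall>b < m. \<forall>d < m.
                    coeff m \<Phi> b d a a = (if b = d then complex_of_real (p a b) else 0)) \<and>
                 (\<forall>a < m. \<forall>b < n. \<forall>c < n.
                    coeff m \<Phi> a a b c = (if b = c then complex_of_real (q b a) else 0)))"
  proof
    assume a: "quantum_operation m n \<Phi> \<and> detection_creation_incoherent m \<Phi>"
    then have tp: "trace_preserving m \<Phi>" and di: "detection_incoherent m \<Phi>" and ci: "creation_incoherent m \<Phi>"
      using QO DCI_iff[OF lin] by blast+
    show "\<exists>p q. cond_prob n m p \<and> cond_prob n m q \<and>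
                 (\<forall>a < n. \<forall>b < m. \<forall>d < m.
                    coeff m \<Phi> b d a a = (if b = d then complex_of_real (p a b) else 0)) \<and>
                 (\<forall>a < m. \<forall>b < n. \<forall>c < n.
                    coeff m \<Phi> a a b c = (if b = c then complex_of_real (q b a) else 0))"
    proof (rule exI[of _ "\<lambda>a b. Re (coeff m \<Phi> b b a a)"], rule exI[of _ "\<lambda>a b. Re (coeff m \<Phi> b b a a)"], intro conjI)
      note p = part_p_fwd[OF lin pos tp di]
      note q = part_q_fwd[OF lin pos tp ci]
      show "cond_prob n m (\<lambda>a b. Re (coeff m \<Phi> b b a a))" using p by blast
      then show "cond_prob n m (\<lambda>a b. Re (coeff m \<Phi> b b a a))" .
      show "\<forall>a < n. \<forall>b < m. \<forall>d < m.
                    coeff m \<Phi> b d a a = (if b = d then complex_of_real (Re (coeff m \<Phi> b b a a)) else 0)"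
        using p by blast
      show "\<forall>a < m. \<forall>b < n. \<forall>c < n.
                    coeff m \<Phi> a a b c = (if b = c then complex_of_real (Re (coeff m \<Phi> a a b b)) else 0)"
        using q by blast
    qed
  next
    assume "\<exists>p q. cond_prob n m p \<and> cond_prob n m q \<and>
                 (\<forall>a < n. \<forall>b < m. \<forall>d < m.
                    coeff m \<Phi> b d a a = (if b = d then complex_of_real (p a b) else 0)) \<and>
                 (\<forall>a < m. \<forall>b < n. \<forall>c < n.
                    coeff m \<Phi> a a b c = (if b = c then complex_of_real (q b a) else 0))"
    then obtain p q where c1: "cond_prob n m p" and h1: "\<forall>a < n. \<forall>b < m. \<forall>d < m.
                    coeff m \<Phi> b d a a = (if b = d then complex_of_real (p a b) else 0)"
      and h2: "\<forall>a < m. \<forall>b < n. \<forall>c < n.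
                    coeff m \<Phi> a a b c = (if b = c then complex_of_real (q b a) else 0)" by blast
    show "quantum_operation m n \<Phi> \<and> detection_creation_incoherent m \<Phi>"
      using part_p_bwd[OF lin c1 h1] part_q_bwd[OF lin h2] QO DCI_iff[OF lin] by blast
  qed
qed

end
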